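(* Let $G$ be a modular noetherian right $\ell$-group. Define $\deg' : G^- \to \mathbb{Z}_{\geq 0}$ by $\deg'(g) = k$ whenever $g = x_k x_{k-1} \cdots x_1$ with all $x_i \in X(G^-)$. Then there is a unique group homomorphism $\deg : G \to \mathbb{Z}$ with $\deg(g) = \deg'(g)$ for all $g \in G^-$. It is given by $\deg(g_2^{-1} g_1) = \deg'(g_1) - \deg'(g_2)$ for $g_1,g_2 \in G^-$.
   Context: A right $\ell$-group is a group $G$ (identity $e$) with a right-invariant partial order $\leq$ ($x \leq y \Rightarrow xz \leq yz$) under which $G$ is a lattice. It is modular if this lattice is modular. It is noetherian if for every $g \in G$ the set $\{h : h \geq g\}$ satisfies the descending chain condition and the set $\{h : h \leq g\}$ satisfies the ascending chain condition. $G^- := \{g : g \leq e\}$. $X(G^-) := \{x \in G : x < e$ and there is no $y$ with $x < y < e\}$ is the set of dual atoms. In a modular noetherian right $\ell$-group, every element of $G^-$ is a product of elements of $X(G^-)$, and any two such factorizations of the same element have the same number of factors. Hence $\deg'$ is a well-defined monoid homomorphism. *)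

theory Defs
  imports "HOL-Algebra.Algebra"
begin

definition is_sup :: "'a set \<Rightarrow> ('a \<Rightarrow> 'a \<Rightarrow> bool) \<Rightarrow> 'a \<Rightarrow> 'a \<Rightarrow> 'a \<Rightarrow> bool" where
  "is_sup C R a b s \<longleftrightarrow> s \<in> C \<and> R a s \<and> R b s \<and> (\<forall>u\<in>C. R a u \<and> R b u \<longrightarrow> R s u)"

definition is_inf :: "'a set \<Rightarrow> ('a \<Rightarrow> 'a \<Rightarrow> bool) \<Rightarrow> 'a \<Rightarrow> 'a \<Rightarrow> 'a \<Rightarrow> bool" where
  "is_inf C R a b s \<longleftrightarrow> s \<in> C \<and> R s a \<and> R s b \<and> (\<forall>u\<in>C. R u a \<and> R u b \<longrightarrow> R u s)"

definition ojoin :: "'a set \<Rightarrow> ('a \<Rightarrow> 'a \<Rightarrow> bool) \<Rightarrow> 'a \<Rightarrow> 'a \<Rightarrow> 'a" where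
  "ojoin C R a b = (THE s. is_sup C R a b s)"

definition omeet :: "'a set \<Rightarrow> ('a \<Rightarrow> 'a \<Rightarrow> bool) \<Rightarrow> 'a \<Rightarrow> 'a \<Rightarrow> 'a" where
  "omeet C R a b = (THE s. is_inf C R a b s)"

definition partial_order_on' :: "'a set \<Rightarrow> ('a \<Rightarrow> 'a \<Rightarrow> bool) \<Rightarrow> bool" where
  "partial_order_on' C R \<longleftrightarrow>
     (\<forall>x\<in>C. R x x) \<and>
     (\<forall>x\<in>C. \<forall>y\<in>C. R x y \<and> R y x \<longrightarrow> x = y) \<and>
     (\<forall>x\<in>C. \<forall>y\<in>C. \<forall>z\<in>C. R x y \<and> R y z \<longrightarrow> R x z)"

definition is_lattice_on :: "'a set \<Rightarrow> ('a \<Rightarrow> 'a \<Rightarrow> bool) \<Rightarrow> bool" where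
  "is_lattice_on C R \<longleftrightarrow> partial_order_on' C R \<and>
     (\<forall>a\<in>C. \<forall>b\<in>C. (\<exists>s. is_sup C R a b s) \<and> (\<exists>i. is_inf C R a b i))"

definition right_lgroup :: "('a, 'b) monoid_scheme \<Rightarrow> ('a \<Rightarrow> 'a \<Rightarrow> bool) \<Rightarrow> bool" where
  "right_lgroup G R \<longleftrightarrow> group G \<and> is_lattice_on (carrier G) R \<and>
     (\<forall>x\<in>carrier G. \<forall>y\<in>carrier G. \<forall>z\<in>carrier G. R x y \<longrightarrow> R (x \<otimes>\<^bsub>G\<^esub> z) (y \<otimes>\<^bsub>G\<^esub> z))"

definition modular_lattice_on :: "'a set \<Rightarrow> ('a \<Rightarrow> 'a \<Rightarrow> bool) \<Rightarrow> bool" where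
  "modular_lattice_on C R \<longleftrightarrow> (\<forall>a\<in>C. \<forall>b\<in>C. \<forall>c\<in>C. R a c \<longrightarrow>
     ojoin C R a (omeet C R b c) = omeet C R (ojoin C R a b) c)"

definition strictly_le :: "('a \<Rightarrow> 'a \<Rightarrow> bool) \<Rightarrow> 'a \<Rightarrow> 'a \<Rightarrow> bool" where
  "strictly_le R x y \<longleftrightarrow> R x y \<and> x \<noteq> y"

definition noetherian_on :: "'a set \<Rightarrow> ('a \<Rightarrow> 'a \<Rightarrow> bool) \<Rightarrow> bool" where
  "noetherian_on C R \<longleftrightarrow> (\<forall>g\<in>C.
     (\<not> (\<exists>f :: nat \<Rightarrow> 'a. \<forall>i. f i \<in> C \<and> R g (f i) \<and> strictly_le R (f (Suc i)) (f i))) \<and>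
     (\<not> (\<exists>f :: nat \<Rightarrow> 'a. \<forall>i. f i \<in> C \<and> R (f i) g \<and> strictly_le R (f i) (f (Suc i)))))"

definition negcone :: "('a, 'b) monoid_scheme \<Rightarrow> ('a \<Rightarrow> 'a \<Rightarrow> bool) \<Rightarrow> 'a set" where
  "negcone G R = {g \<in> carrier G. R g \<one>\<^bsub>G\<^esub>}"

definition dual_atoms :: "('a, 'b) monoid_scheme \<Rightarrow> ('a \<Rightarrow> 'a \<Rightarrow> bool) \<Rightarrow> 'a set" where
  "dual_atoms G R = {x \<in> carrier G. strictly_le R x \<one>\<^bsub>G\<^esub> \<and>
      \<not> (\<exists>y\<in>carrier G. strictly_le R x y \<and> strictly_le R y \<one>\<^bsub>G\<^esub>)}"

text \<open>Product x_k x_(k-1) ... x_1 of the list [x_k, ..., x_1].\<close>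
definition lprod :: "('a, 'b) monoid_scheme \<Rightarrow> 'a list \<Rightarrow> 'a" where
  "lprod G xs = foldr (\<lambda>x y. x \<otimes>\<^bsub>G\<^esub> y) xs \<one>\<^bsub>G\<^esub>"

definition deg' :: "('a, 'b) monoid_scheme \<Rightarrow> ('a \<Rightarrow> 'a \<Rightarrow> bool) \<Rightarrow> 'a \<Rightarrow> nat" where
  "deg' G R g = (THE k. \<exists>xs. length xs = k \<and> set xs \<subseteq> dual_atoms G R \<and> g = lprod G xs)"

end

theory Submission
  imports Defs
begin

locale mnrl = group G for G :: "('a, 'b) monoid_scheme" (structure) +
  fixes R :: "'a \<Rightarrow> 'a \<Rightarrow> bool"
  assumes lat: "is_lattice_on (carrier G) R"
    and rmono0: "\<forall>x\<in>carrier G. \<forall>y\<in>carrier G. \<forall>z\<in>carrier G. R x y \<longrightarrow> R (x \<otimes> z) (y \<otimes> z)"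
    and modl: "modular_lattice_on (carrier G) R"
    and noeth: "noetherian_on (carrier G) R"
begin

abbreviation "C \<equiv> carrier G"
abbreviation "J \<equiv> ojoin (carrier G) R"
abbreviation "M \<equiv> omeet (carrier G) R"
abbreviation "slt \<equiv> strictly_le R"

lemma refl: "x \<in> C \<Longrightarrow> R x x"
  using lat unfolding is_lattice_on_def partial_order_on'_def by blast
lemma antisym: "\<lbrakk>x \<in> C; y \<in> C; R x y; R y x\<rbrakk> \<Longrightarrow> x = y"
  using lat unfolding is_lattice_on_def partial_order_on'_def by blast
lemma trans: "\<lbrakk>x \<in> C; y \<in> C; z \<in> C; R x y; R y z\<rbrakk> \<Longrightarrow> R x z"
  using lat unfolding is_lattice_on_def partial_order_on'_def by blast

lemma join_is: assumes "a \<in> C" "b \<in> C" shows "is_sup C R a b (J a b)"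
proof -
  obtain s where s: "is_sup C R a b s" using lat assms unfolding is_lattice_on_def by blast
  have "J a b = s" unfolding ojoin_def
  proof (rule the_equality[where P="\<lambda>t. is_sup C R a b t", OF s])
    fix t assume "is_sup C R a b t"
    with s show "t = s" unfolding is_sup_def using antisym by blast
  qed
  with s show ?thesis by simp
qed

lemma meet_is: assumes "a \<in> C" "b \<in> C" shows "is_inf C R a b (M a b)"
proof -
  obtain s where s: "is_inf C R a b s" using lat assms unfolding is_lattice_on_def by blast
  have "M a b = s" unfolding omeet_def
  proof (rule the_equality[where P="\<lambda>t. is_inf C R a b t", OF s])
    fix t assume "is_inf C R a b t"
    with s show "t = s" unfolding is_inf_def using antisym by blast
  qed
  with s show ?thesis by simp
qed

lemma join_in: "a \<in> C \<Longrightarrow> b \<in> C \<Longrightarrow> J a b \<in> C" using join_is is_sup_def by metis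
lemma join_ub1: "a \<in> C \<Longrightarrow> b \<in> C \<Longrightarrow> R a (J a b)" using join_is is_sup_def by metis
lemma join_ub2: "a \<in> C \<Longrightarrow> b \<in> C \<Longrightarrow> R b (J a b)" using join_is is_sup_def by metis
lemma join_least: "a \<in> C \<Longrightarrow> b \<in> C \<Longrightarrow> u \<in> C \<Longrightarrow> R a u \<Longrightarrow> R b u \<Longrightarrow> R (J a b) u"
  using join_is is_sup_def by metis
lemma meet_in: "a \<in> C \<Longrightarrow> b \<in> C \<Longrightarrow> M a b \<in> C" using meet_is is_inf_def by metis
lemma meet_lb1: "a \<in> C \<Longrightarrow> b \<in> C \<Longrightarrow> R (M a b) a" using meet_is is_inf_def by metis
lemma meet_lb2: "a \<in> C \<Longrightarrow> b \<in> C \<Longrightarrow> R (M a b) b" using meet_is is_inf_def by metis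
lemma meet_greatest: "a \<in> C \<Longrightarrow> b \<in> C \<Longrightarrow> u \<in> C \<Longrightarrow> R u a \<Longrightarrow> R u b \<Longrightarrow> R u (M a b)"
  using meet_is is_inf_def by metis

lemma join_comm: "a \<in> C \<Longrightarrow> b \<in> C \<Longrightarrow> J a b = J b a"
  by (meson antisym join_in join_least join_ub1 join_ub2)
lemma meet_comm: "a \<in> C \<Longrightarrow> b \<in> C \<Longrightarrow> M a b = M b a"
  by (meson antisym meet_in meet_greatest meet_lb1 meet_lb2)
lemma join_eq_right: "a \<in> C \<Longrightarrow> b \<in> C \<Longrightarrow> R a b \<Longrightarrow> J a b = b"
  by (meson antisym join_in join_least join_ub2 refl)
lemma join_eq_left: "a \<in> C \<Longrightarrow> b \<in> C \<Longrightarrow> R b a \<Longrightarrow> J a b = a"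
  by (meson antisym join_in join_least join_ub1 refl)
lemma meet_eq_left: "a \<in> C \<Longrightarrow> b \<in> C \<Longrightarrow> R a b \<Longrightarrow> M a b = a"
  by (meson antisym meet_in meet_greatest meet_lb1 refl)
lemma meet_eq_right: "a \<in> C \<Longrightarrow> b \<in> C \<Longrightarrow> R b a \<Longrightarrow> M a b = b"
  by (meson antisym meet_in meet_greatest meet_lb2 refl)

lemma rmono: "x \<in> C \<Longrightarrow> y \<in> C \<Longrightarrow> z \<in> C \<Longrightarrow> R x y \<Longrightarrow> R (x \<otimes> z) (y \<otimes> z)"
  using rmono0 by blast

lemma cancel1: "x \<in> C \<Longrightarrow> z \<in> C \<Longrightarrow> x \<otimes> z \<otimes> inv z = x"
  by (simp add: m_assoc)
lemma cancel2: "x \<in> C \<Longrightarrow> z \<in> C \<Longrightarrow> x \<otimes> inv z \<otimes> z = x"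
  by (simp add: m_assoc)

lemma slt_mult: "x \<in> C \<Longrightarrow> y \<in> C \<Longrightarrow> z \<in> C \<Longrightarrow> slt x y \<Longrightarrow> slt (x \<otimes> z) (y \<otimes> z)"
  unfolding strictly_le_def using rmono r_cancel by blast

definition cov where
  "cov x y \<longleftrightarrow> x \<in> C \<and> y \<in> C \<and> slt x y \<and> \<not> (\<exists>z\<in>C. slt x z \<and> slt z y)"

lemma cov_mult: assumes "cov x y" "z \<in> C" shows "cov (x \<otimes> z) (y \<otimes> z)"
proof -
  have x: "x \<in> C" and y: "y \<in> C" and s: "slt x y" and n: "\<not> (\<exists>w\<in>C. slt x w \<and> slt w y)"
    using assms unfolding cov_def by auto
  have "\<not> (\<exists>w\<in>C. slt (x \<otimes> z) w \<and> slt w (y \<otimes> z))"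
  proof
    assume "\<exists>w\<in>C. slt (x \<otimes> z) w \<and> slt w (y \<otimes> z)"
    then obtain w where w: "w \<in> C" "slt (x \<otimes> z) w" "slt w (y \<otimes> z)" by blast
    have "slt (x \<otimes> z \<otimes> inv z) (w \<otimes> inv z)" "slt (w \<otimes> inv z) (y \<otimes> z \<otimes> inv z)"
      using slt_mult w x y assms(2) by auto
    then show False using n x y assms(2) w cancel1 by (metis inv_closed m_closed)
  qed
  then show ?thesis unfolding cov_def using x y assms(2) s slt_mult by auto
qed

abbreviation "Xa \<equiv> dual_atoms G R"

lemma X_iff: "x \<in> Xa \<longleftrightarrow> cov x \<one>"
  unfolding dual_atoms_def cov_def by auto

lemma X_sub: "Xa \<subseteq> C" unfolding dual_atoms_def by auto

lemma atom_cov: "x \<in> Xa \<Longrightarrow> a \<in> C \<Longrightarrow> cov (x \<otimes> a) a"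
  using cov_mult[of x \<one> a] X_iff by simp

lemma cov_atom: "cov c h \<Longrightarrow> c \<otimes> inv h \<in> Xa"
  using cov_mult[of c h "inv h"] X_iff unfolding cov_def by auto

lemma lprod_Nil[simp]: "lprod G [] = \<one>" by (simp add: lprod_def)
lemma lprod_Cons[simp]: "lprod G (x # xs) = x \<otimes> lprod G xs" by (simp add: lprod_def)
lemma lprod_closed: "set xs \<subseteq> C \<Longrightarrow> lprod G xs \<in> C" by (induction xs) auto
lemma lprod_append: "set xs \<subseteq> C \<Longrightarrow> set ys \<subseteq> C \<Longrightarrow> lprod G (xs @ ys) = lprod G xs \<otimes> lprod G ys"
  by (induction xs) (auto simp: m_assoc lprod_closed)

lemma fac_le1: "set xs \<subseteq> Xa \<Longrightarrow> R (lprod G xs) \<one>"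
proof (induction xs)
  case Nil then show ?case by (simp add: refl)
next
  case (Cons x xs)
  have xs: "set xs \<subseteq> Xa" and x: "x \<in> Xa" using Cons.prems by auto
  have l: "lprod G xs \<in> C" using xs X_sub lprod_closed by blast
  have c: "cov (x \<otimes> lprod G xs) (lprod G xs)" using x l by (rule atom_cov)
  have r: "R (x \<otimes> lprod G xs) (lprod G xs)" "x \<otimes> lprod G xs \<in> C"
    using c unfolding cov_def strictly_le_def by blast+
  have "R (lprod G xs) \<one>" using Cons.IH xs by blast
  then have "R (x \<otimes> lprod G xs) \<one>" using trans[OF r(2) l one_closed r(1)] by blast
  then show ?case by simp
qed

lemma fac_ne: "set xs \<subseteq> Xa \<Longrightarrow> xs \<noteq> [] \<Longrightarrow> lprod G xs \<noteq> \<one>"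
proof (cases xs)
  case (Cons x xs')
  assume a: "set xs \<subseteq> Xa"
  have xs': "set xs' \<subseteq> Xa" and x: "x \<in> Xa" using a Cons by auto
  have l: "lprod G xs' \<in> C" using xs' X_sub lprod_closed by blast
  have c: "cov (x \<otimes> lprod G xs') (lprod G xs')" using x l by (rule atom_cov)
  have r: "R (x \<otimes> lprod G xs') (lprod G xs')" "x \<otimes> lprod G xs' \<noteq> lprod G xs'"
    using c unfolding cov_def strictly_le_def by blast+
  have l1: "R (lprod G xs') \<one>" using fac_le1 xs' by blast
  have "x \<otimes> lprod G xs' \<noteq> \<one>"
  proof
    assume e: "x \<otimes> lprod G xs' = \<one>"
    then have "R \<one> (lprod G xs')" using r(1) by simp
    then have "lprod G xs' = \<one>" using antisym[OF l one_closed l1] by blast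
    then show False using r(2) e by simp
  qed
  then show ?thesis using Cons by simp
qed simp

lemma cover_exists:
  assumes c: "c \<in> C" "R c \<one>" "c \<noteq> \<one>"
  shows "\<exists>h. cov c h \<and> R h \<one>"
proof -
  define r where "r = {(x,y). x \<in> C \<and> y \<in> C \<and> R c x \<and> R c y \<and> slt x y}"
  have "wf r" unfolding wf_iff_no_infinite_down_chain
  proof
    assume "\<exists>f. \<forall>i. (f (Suc i), f i) \<in> r"
    then obtain f where "\<forall>i. (f (Suc i), f i) \<in> r" by blast
    then have "\<forall>i. f i \<in> C \<and> R c (f i) \<and> slt (f (Suc i)) (f i)" by (auto simp: r_def)
    then show False using noeth c unfolding noetherian_on_def by blast
  qed
  define Q where "Q = {h \<in> C. slt c h \<and> R h \<one>}"
  have "\<one> \<in> Q" using c unfolding Q_def strictly_le_def by (auto simp: refl)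
  then obtain h where h: "h \<in> Q" and hm: "\<And>y. (y, h) \<in> r \<Longrightarrow> y \<notin> Q"
    using wfE_min[OF \<open>wf r\<close>] by metis
  have "cov c h"
    unfolding cov_def
  proof (intro conjI)
    show "\<not> (\<exists>z\<in>C. slt c z \<and> slt z h)"
    proof
      assume "\<exists>z\<in>C. slt c z \<and> slt z h"
      then obtain z where z: "z \<in> C" "slt c z" "slt z h" by blast
      have "(z, h) \<in> r" using z h c unfolding r_def Q_def strictly_le_def by auto
      moreover have "z \<in> Q" using z h trans[of z h \<one>] unfolding Q_def strictly_le_def by auto
      ultimately show False using hm by blast
    qed
  qed (use c h Q_def in auto)
  then show ?thesis using h Q_def by auto
qed

lemma fac_exists: "c \<in> C \<Longrightarrow> R c \<one> \<Longrightarrow> \<exists>xs. set xs \<subseteq> Xa \<and> c = lprod G xs"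
proof -
  define r where "r = {(x,y). x \<in> C \<and> y \<in> C \<and> R x \<one> \<and> R y \<one> \<and> slt y x}"
  have "wf r" unfolding wf_iff_no_infinite_down_chain
  proof
    assume "\<exists>f. \<forall>i. (f (Suc i), f i) \<in> r"
    then obtain f where "\<forall>i. (f (Suc i), f i) \<in> r" by blast
    then have "\<forall>i. f i \<in> C \<and> R (f i) \<one> \<and> slt (f i) (f (Suc i))" by (auto simp: r_def)
    then show False using noeth unfolding noetherian_on_def by blast
  qed
  have "c \<in> C \<and> R c \<one> \<longrightarrow> (\<exists>xs. set xs \<subseteq> Xa \<and> c = lprod G xs)"
    using \<open>wf r\<close>
  proof (induction c rule: wf_induct_rule)
    case (less c)
    show ?case
    proof
      assume c: "c \<in> C \<and> R c \<one>"
      show "\<exists>xs. set xs \<subseteq> Xa \<and> c = lprod G xs"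
      proof (cases "c = \<one>")
        case True then show ?thesis by (intro exI[of _ "[]"]) simp
      next
        case False
        then obtain h where h: "cov c h" "R h \<one>" using cover_exists c by blast
        have "(h, c) \<in> r" using h c unfolding r_def cov_def by auto
        then obtain xs where xs: "set xs \<subseteq> Xa" "h = lprod G xs"
          using less h unfolding cov_def by blast
        have "c = (c \<otimes> inv h) \<otimes> h" using h c cancel2 unfolding cov_def by auto
        then show ?thesis using xs cov_atom[OF h(1)]
          by (intro exI[of _ "(c \<otimes> inv h) # xs"]) auto
      qed
    qed
  qed
  then show "c \<in> C \<Longrightarrow> R c \<one> \<Longrightarrow> \<exists>xs. set xs \<subseteq> Xa \<and> c = lprod G xs" by blast
qed

lemma cov_modular:
  assumes a: "a \<in> C" and b: "b \<in> C" and cm: "cov (M a b) a"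
  shows "cov b (J a b)"
proof -
  let ?m = "M a b" and ?j = "J a b"
  have m: "?m \<in> C" "R ?m a" "R ?m b" using meet_in[OF a b] meet_lb1[OF a b] meet_lb2[OF a b] by blast+
  have j: "?j \<in> C" "R a ?j" "R b ?j" using join_in[OF a b] join_ub1[OF a b] join_ub2[OF a b] by blast+
  have ma: "?m \<noteq> a" using cm unfolding cov_def strictly_le_def by blast
  have nb: "\<not> (\<exists>z\<in>C. slt ?m z \<and> slt z a)" using cm unfolding cov_def by blast
  have bj: "b \<noteq> ?j"
  proof
    assume "b = ?j"
    then have "R a b" using j(2) by simp
    then have "?m = a" using meet_eq_left[OF a b] by blast
    then show False using ma by blast
  qed
  have "\<not> (\<exists>t\<in>C. slt b t \<and> slt t ?j)"
  proof
    assume "\<exists>t\<in>C. slt b t \<and> slt t ?j"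
    then obtain t where t: "t \<in> C" "slt b t" "slt t ?j" by blast
    have bt: "R b t" and tj: "R t ?j" "t \<noteq> ?j" and bt2: "b \<noteq> t" using t unfolding strictly_le_def by blast+
    have "J b (M a t) = M (J b a) t"
      using modl b a t(1) bt unfolding modular_lattice_on_def by blast
    also have "J b a = ?j" using join_comm[OF a b] by simp
    also have "M ?j t = t" using meet_eq_right[OF j(1) t(1) tj(1)] .
    finally have eq: "J b (M a t) = t" .
    let ?p = "M a t"
    have p: "?p \<in> C" "R ?p a" using meet_in[OF a t(1)] meet_lb1[OF a t(1)] by blast+
    have "R ?m t" using trans[OF m(1) b t(1) m(3) bt] .
    then have mp: "R ?m ?p" using meet_greatest[OF a t(1) m(1) m(2)] by blast
    have "?p = ?m \<or> ?p = a"
    proof (rule ccontr)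
      assume "\<not> (?p = ?m \<or> ?p = a)"
      then have "slt ?m ?p" "slt ?p a" using mp p(2) unfolding strictly_le_def by auto
      then show False using nb p(1) by blast
    qed
    then show False
    proof
      assume "?p = ?m"
      then have "t = J b ?m" using eq by simp
      also have "\<dots> = b" using join_eq_left[OF b m(1) m(3)] .
      finally show False using bt2 by simp
    next
      assume "?p = a"
      then have "t = J b a" using eq by simp
      also have "\<dots> = ?j" using join_comm[OF a b] by simp
      finally show False using tj(2) by simp
    qed
  qed
  moreover have "slt b ?j" using j(3) bj unfolding strictly_le_def by blast
  ultimately show ?thesis unfolding cov_def using b j(1) by blast
qed

lemma fac_unique:
  "\<forall>xs ys. length xs = n \<longrightarrow> set xs \<subseteq> Xa \<longrightarrow> set ys \<subseteq> Xa \<longrightarrow> lprod G xs = lprod G ys \<longrightarrow> length ys = n"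
proof (induction n)
  case 0
  show ?case
  proof (intro allI impI)
    fix xs ys :: "'a list"
    assume "length xs = 0" "set xs \<subseteq> Xa" "set ys \<subseteq> Xa" "lprod G xs = lprod G ys"
    then have "lprod G ys = \<one>" "set ys \<subseteq> Xa" by simp_all
    then have "ys = []" using fac_ne by blast
    then show "length ys = 0" by simp
  qed
next
  case (Suc n)
  have IH: "\<And>xs ys. length xs = n \<Longrightarrow> set xs \<subseteq> Xa \<Longrightarrow> set ys \<subseteq> Xa \<Longrightarrow> lprod G xs = lprod G ys \<Longrightarrow> length ys = n"
    using Suc.IH by blast
  show ?case
  proof (intro allI impI)
    fix xs ys
    assume xs: "length xs = Suc n" "set xs \<subseteq> Xa" and ys: "set ys \<subseteq> Xa" and eq: "lprod G xs = lprod G ys"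
    obtain x xs' where xs': "xs = x # xs'" using xs by (cases xs) auto
    have "ys \<noteq> []"
    proof
      assume "ys = []"
      then have "lprod G xs = \<one>" using eq by simp
      moreover have "xs \<noteq> []" using xs' by simp
      then have "lprod G xs \<noteq> \<one>" using fac_ne[OF xs(2)] by blast
      ultimately show False by blast
    qed
    then obtain y ys' where ys': "ys = y # ys'" by (cases ys) auto
    let ?a = "lprod G xs'" and ?b = "lprod G ys'"
    let ?g = "lprod G xs"
    have x: "x \<in> Xa" "set xs' \<subseteq> Xa" using xs(2) xs' by auto
    have y: "y \<in> Xa" "set ys' \<subseteq> Xa" using ys ys' by auto
    have ln: "length xs' = n" using xs(1) xs' by simp
    have aC: "?a \<in> C" using x(2) X_sub lprod_closed by blast
    have bC: "?b \<in> C" using y(2) X_sub lprod_closed by blast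
    have a1: "R ?a \<one>" using fac_le1[OF x(2)] .
    have b1: "R ?b \<one>" using fac_le1[OF y(2)] .
    have ga: "cov ?g ?a" using atom_cov[OF x(1) aC] xs' by simp
    have "cov (lprod G ys) ?b" using atom_cov[OF y(1) bC] ys' by simp
    then have gb: "cov ?g ?b" using eq by simp
    have gC: "?g \<in> C" using ga unfolding cov_def by blast
    have ga': "R ?g ?a" "?g \<noteq> ?a" "\<not> (\<exists>z\<in>C. slt ?g z \<and> slt z ?a)"
      using ga unfolding cov_def strictly_le_def by blast+
    have gb': "R ?g ?b" "?g \<noteq> ?b" "\<not> (\<exists>z\<in>C. slt ?g z \<and> slt z ?b)"
      using gb unfolding cov_def strictly_le_def by blast+
    show "length ys = Suc n"
    proof (cases "?a = ?b")
      case True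
      then have "length ys' = n" using IH[OF ln x(2) y(2)] by blast
      then show ?thesis using ys' by simp
    next
      case False
      let ?m = "M ?a ?b"
      have mC: "?m \<in> C" "R ?m ?a" "R ?m ?b"
        using meet_in[OF aC bC] meet_lb1[OF aC bC] meet_lb2[OF aC bC] by blast+
      have gm: "R ?g ?m" using meet_greatest[OF aC bC gC ga'(1) gb'(1)] .
      have "?m = ?g"
      proof (rule ccontr)
        assume ne: "?m \<noteq> ?g"
        have "?m = ?a"
        proof (rule ccontr)
          assume "?m \<noteq> ?a"
          then have "slt ?g ?m" "slt ?m ?a" using ne gm mC(2) unfolding strictly_le_def by auto
          then show False using ga'(3) mC(1) by blast
        qed
        then have "slt ?g ?a" "slt ?a ?b" using ga'(1,2) mC(3) False unfolding strictly_le_def by auto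
        then show False using gb'(3) aC by blast
      qed
      then have c1: "cov ?m ?a" using ga by simp
      have "M ?b ?a = ?g" using \<open>?m = ?g\<close> meet_comm[OF aC bC] by simp
      then have c2: "cov (M ?b ?a) ?b" using gb by simp
      let ?j = "J ?a ?b"
      have cb: "cov ?b ?j" using cov_modular[OF aC bC c1] .
      have "cov ?a (J ?b ?a)" using cov_modular[OF bC aC c2] .
      then have ca: "cov ?a ?j" using join_comm[OF aC bC] by simp
      have jC: "?j \<in> C" "R ?j \<one>" using join_in[OF aC bC] join_least[OF aC bC one_closed a1 b1] by blast+
      obtain zs where zs: "set zs \<subseteq> Xa" "?j = lprod G zs" using fac_exists jC by blast
      have "?a = (?a \<otimes> inv ?j) \<otimes> ?j" using cancel2[OF aC jC(1)] by simp
      then have ea: "?a = lprod G ((?a \<otimes> inv ?j) # zs)" using zs(2) by simp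
      have "?b = (?b \<otimes> inv ?j) \<otimes> ?j" using cancel2[OF bC jC(1)] by simp
      then have eb: "?b = lprod G ((?b \<otimes> inv ?j) # zs)" using zs(2) by simp
      have sa: "set ((?a \<otimes> inv ?j) # zs) \<subseteq> Xa" using zs(1) cov_atom[OF ca] by simp
      have sb: "set ((?b \<otimes> inv ?j) # zs) \<subseteq> Xa" using zs(1) cov_atom[OF cb] by simp
      have l1: "length ((?a \<otimes> inv ?j) # zs) = n"
        using IH[OF ln x(2) sa ea] .
      then have l2: "length ((?b \<otimes> inv ?j) # zs) = n" by simp
      have "length ys' = n"
        using IH[OF l2 sb y(2) eb[symmetric]] .
      then show ?thesis using ys' by simp
    qed
  qed
qed

lemma deg'_fac: "set xs \<subseteq> Xa \<Longrightarrow> deg' G R (lprod G xs) = length xs"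
  unfolding deg'_def
proof (rule the_equality)
  assume "set xs \<subseteq> Xa"
  then show "\<exists>ys. length ys = length xs \<and> set ys \<subseteq> Xa \<and> lprod G xs = lprod G ys" by blast
next
  fix k assume "set xs \<subseteq> Xa" "\<exists>ys. length ys = k \<and> set ys \<subseteq> Xa \<and> lprod G xs = lprod G ys"
  then show "k = length xs" using fac_unique by blast
qed

abbreviation "N \<equiv> negcone G R"

lemma N_iff: "g \<in> N \<longleftrightarrow> g \<in> C \<and> R g \<one>" unfolding negcone_def by auto

lemma N_fac: "g \<in> N \<Longrightarrow> \<exists>xs. set xs \<subseteq> Xa \<and> g = lprod G xs \<and> deg' G R g = length xs"
  using fac_exists deg'_fac N_iff by metis

lemma N_mult: "a \<in> N \<Longrightarrow> b \<in> N \<Longrightarrow> a \<otimes> b \<in> N"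
  using rmono[of a \<one> b] trans[of "a \<otimes> b" b \<one>] N_iff by auto

lemma deg'_mult: assumes "a \<in> N" "b \<in> N" shows "deg' G R (a \<otimes> b) = deg' G R a + deg' G R b"
proof -
  obtain xs where xs: "set xs \<subseteq> Xa" "a = lprod G xs" "deg' G R a = length xs" using N_fac assms by blast
  obtain ys where ys: "set ys \<subseteq> Xa" "b = lprod G ys" "deg' G R b = length ys" using N_fac assms by blast
  have "a \<otimes> b = lprod G (xs @ ys)" using lprod_append xs ys X_sub by auto
  then show ?thesis using deg'_fac[of "xs @ ys"] xs ys by auto
qed

lemma deg'_one: "deg' G R \<one> = 0" using deg'_fac[of "[]"] by simp

lemma one_N: "\<one> \<in> N" using N_iff refl by auto

lemma ore: assumes "h1 \<in> N" "h2 \<in> N" shows "\<exists>u\<in>N. \<exists>v\<in>N. u \<otimes> h1 = v \<otimes> h2"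
proof -
  let ?m = "M h1 h2"
  have h: "h1 \<in> C" "h2 \<in> C" using assms N_iff by auto
  have m: "?m \<in> C" "R ?m h1" "R ?m h2" using meet_in meet_lb1 meet_lb2 h by auto
  have "?m \<otimes> inv h1 \<in> N" using rmono[of ?m h1 "inv h1"] m h N_iff by auto
  moreover have "?m \<otimes> inv h2 \<in> N" using rmono[of ?m h2 "inv h2"] m h N_iff by auto
  moreover have "?m \<otimes> inv h1 \<otimes> h1 = ?m \<otimes> inv h2 \<otimes> h2" using cancel2 m h by auto
  ultimately show ?thesis by blast
qed

lemma welldef:
  assumes "h1 \<in> N" "h2 \<in> N" "k1 \<in> N" "k2 \<in> N" "inv h2 \<otimes> h1 = inv k2 \<otimes> k1"
  shows "int (deg' G R h1) - int (deg' G R h2) = int (deg' G R k1) - int (deg' G R k2)"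
proof -
  have C: "h1 \<in> C" "h2 \<in> C" "k1 \<in> C" "k2 \<in> C" using assms N_iff by auto
  obtain u v where uv: "u \<in> N" "v \<in> N" "u \<otimes> h2 = v \<otimes> k2" using ore assms by blast
  have uvC: "u \<in> C" "v \<in> C" using uv N_iff by auto
  have "u \<otimes> h1 = (u \<otimes> h2) \<otimes> (inv h2 \<otimes> h1)" using C uvC by (simp add: m_assoc[symmetric] cancel1 cancel2)
  also have "\<dots> = (v \<otimes> k2) \<otimes> (inv k2 \<otimes> k1)" using uv assms by simp
  also have "\<dots> = v \<otimes> k1" using C uvC by (simp add: m_assoc[symmetric] cancel1 cancel2)
  finally have e: "u \<otimes> h1 = v \<otimes> k1" .
  have "deg' G R u + deg' G R h2 = deg' G R v + deg' G R k2" using deg'_mult uv assms by metis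
  moreover have "deg' G R u + deg' G R h1 = deg' G R v + deg' G R k1" using deg'_mult uv assms e by metis
  ultimately show ?thesis by linarith
qed

lemma decomp: assumes "g \<in> C" shows "\<exists>h1\<in>N. \<exists>h2\<in>N. g = inv h2 \<otimes> h1"
proof -
  let ?h1 = "M g \<one>"
  have h1: "?h1 \<in> C" "R ?h1 g" "R ?h1 \<one>" using meet_in meet_lb1 meet_lb2 assms by auto
  let ?h2 = "?h1 \<otimes> inv g"
  have "R ?h2 \<one>" using rmono[of ?h1 g "inv g"] h1 assms by auto
  then have h2: "?h2 \<in> N" using h1 assms N_iff by auto
  have "inv ?h2 \<otimes> ?h1 = g" using h1 assms by (simp add: inv_mult_group m_assoc)
  then show ?thesis using h1 h2 N_iff by metis
qed

definition degf where
  "degf g = (SOME d. \<exists>h1\<in>N. \<exists>h2\<in>N. g = inv h2 \<otimes> h1 \<and> d = int (deg' G R h1) - int (deg' G R h2))"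

lemma degf_eq: assumes "h1 \<in> N" "h2 \<in> N"
  shows "degf (inv h2 \<otimes> h1) = int (deg' G R h1) - int (deg' G R h2)"
proof -
  have "\<exists>d. \<exists>k1\<in>N. \<exists>k2\<in>N. inv h2 \<otimes> h1 = inv k2 \<otimes> k1 \<and> d = int (deg' G R k1) - int (deg' G R k2)"
    using assms by blast
  from someI_ex[OF this] obtain k1 k2 where "k1 \<in> N" "k2 \<in> N" "inv h2 \<otimes> h1 = inv k2 \<otimes> k1"
    "degf (inv h2 \<otimes> h1) = int (deg' G R k1) - int (deg' G R k2)" unfolding degf_def by blast
  then show ?thesis using welldef assms by metis
qed

lemma degf_hom: "degf \<in> hom G integer_group"
proof (rule homI)
  fix g g' assume g: "g \<in> C" and g': "g' \<in> C"
  obtain h1 h2 where h: "h1 \<in> N" "h2 \<in> N" "g = inv h2 \<otimes> h1" using decomp g by blast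
  obtain k1 k2 where k: "k1 \<in> N" "k2 \<in> N" "g' = inv k2 \<otimes> k1" using decomp g' by blast
  obtain u v where uv: "u \<in> N" "v \<in> N" "u \<otimes> h1 = v \<otimes> k2" using ore h k by blast
  have C: "h1 \<in> C" "h2 \<in> C" "k1 \<in> C" "k2 \<in> C" "u \<in> C" "v \<in> C" using h k uv N_iff by auto
  have vv: "v = u \<otimes> h1 \<otimes> inv k2" using uv C cancel1 by metis
  have "g \<otimes> g' = inv (u \<otimes> h2) \<otimes> (v \<otimes> k1)"
    using C h k by (simp add: vv inv_mult_group m_assoc[symmetric] cancel1 cancel2)
  then have "degf (g \<otimes> g') = int (deg' G R (v \<otimes> k1)) - int (deg' G R (u \<otimes> h2))"
    using degf_eq N_mult uv h k by metis
  also have "\<dots> = int (deg' G R v) + int (deg' G R k1) - int (deg' G R u) - int (deg' G R h2)"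
    using deg'_mult uv h k by simp
  finally have e: "degf (g \<otimes> g') = int (deg' G R v) + int (deg' G R k1) - int (deg' G R u) - int (deg' G R h2)" .
  have "deg' G R u + deg' G R h1 = deg' G R v + deg' G R k2" using deg'_mult uv h k by metis
  then show "degf (g \<otimes> g') = degf g \<otimes>\<^bsub>integer_group\<^esub> degf g'"
    using e degf_eq h k by simp
qed simp

end

theorem mainTheorem3:
  fixes G :: "('a, 'b) monoid_scheme" and R :: "'a \<Rightarrow> 'a \<Rightarrow> bool"
  assumes "right_lgroup G R"
    and "modular_lattice_on (carrier G) R"
    and "noetherian_on (carrier G) R"
  shows "\<exists>deg. deg \<in> hom G integer_group
            \<and> (\<forall>g\<in>negcone G R. deg g = int (deg' G R g))
            \<and> (\<forall>g1\<in>negcone G R. \<forall>g2\<in>negcone G R.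
                 deg (inv\<^bsub>G\<^esub> g2 \<otimes>\<^bsub>G\<^esub> g1) = int (deg' G R g1) - int (deg' G R g2))
            \<and> (\<forall>d. d \<in> hom G integer_group \<and> (\<forall>g\<in>negcone G R. d g = int (deg' G R g))
                   \<longrightarrow> (\<forall>g\<in>carrier G. d g = deg g))"
proof -
  have "mnrl G R" using assms unfolding right_lgroup_def
    by (intro mnrl.intro mnrl_axioms.intro) auto
  then interpret mnrl G R .
  show ?thesis
  proof (intro exI[of _ degf] conjI ballI allI impI)
    show "degf \<in> hom G integer_group" by (rule degf_hom)
  next
    fix g assume g: "g \<in> N"
    have "degf (inv\<^bsub>G\<^esub> \<one>\<^bsub>G\<^esub> \<otimes>\<^bsub>G\<^esub> g) = int (deg' G R g) - int (deg' G R \<one>\<^bsub>G\<^esub>)" using degf_eq g one_N by blast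
    then show "degf g = int (deg' G R g)" using g N_iff deg'_one by simp
  next
    fix g1 g2 assume "g1 \<in> N" "g2 \<in> N"
    then show "degf (inv\<^bsub>G\<^esub> g2 \<otimes>\<^bsub>G\<^esub> g1) = int (deg' G R g1) - int (deg' G R g2)" by (rule degf_eq)
  next
    fix d g assume d: "d \<in> hom G integer_group \<and> (\<forall>g\<in>N. d g = int (deg' G R g))" and g: "g \<in> C"
    obtain h1 h2 where h: "h1 \<in> N" "h2 \<in> N" "g = inv\<^bsub>G\<^esub> h2 \<otimes>\<^bsub>G\<^esub> h1" using decomp g by blast
    have C: "h1 \<in> C" "h2 \<in> C" using h N_iff by auto
    have hm: "\<And>x y. x \<in> C \<Longrightarrow> y \<in> C \<Longrightarrow> d (x \<otimes>\<^bsub>G\<^esub> y) = d x + d y"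
      using d unfolding hom_def by simp
    have "d (inv\<^bsub>G\<^esub> h2) + d h2 = d \<one>\<^bsub>G\<^esub>" using hm[of "inv\<^bsub>G\<^esub> h2" h2] C by simp
    also have "d \<one>\<^bsub>G\<^esub> = 0" using d one_N deg'_one by simp
    finally have "d g = d h1 - d h2" using hm[of "inv\<^bsub>G\<^esub> h2" h1] C h by simp
    then show "d g = degf g" using d h degf_eq by simp
  qed
qed

end
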